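(* Let ${\bf p}=({\bf p}_1,\dots,{\bf p}_n)$ and ${\bf q}=({\bf q}_1,\dots,{\bf q}_m)$ be configurations in $\mathbb R^d$. Suppose there are subconfigurations ${\bf p}'\subset{\bf p}$ and ${\bf q}'\subset{\bf q}$ such that the combined set of points of $({\bf p}',{\bf q}')$ is in general position in $\mathbb R^d$ and there is no quadric strictly separating ${\bf p}'$ and ${\bf q}'$. Then $(K(n,m),{\bf p},{\bf q})$ is universally rigid, and the affine span of ${\bf p}$ and the affine span of ${\bf q}$ are each all of $\mathbb R^d$.
   Context: $(K(n,m),{\bf p},{\bf q})$ is the framework with bars joining ${\bf p}_i$ to ${\bf q}_j$ for all $i,j$. It is universally rigid if every configuration in any $\mathbb R^D$ with the same bar lengths has all pairwise distances equal to those of the original. A configuration in $\mathbb R^d$ is in general position if every $k+1$ of its points span a $k$-dimensional affine subspace, for $k=1,\dots,d$. For ${\bf x}\in\mathbb R^d$, $\hat{\bf x}$ is ${\bf x}$ with a $1$ appended. Point sets ${\bf a}$, ${\bf b}$ are strictly separated by a quadric if there is a symmetric $(d+1)\times(d+1)$ matrix $A$ with $\hat{\bf b}^tA\hat{\bf b}<0<\hat{\bf a}^tA\hat{\bf a}$ for all ${\bf a}$ in the first set and ${\bf b}$ in the second. *)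

theory Defs
  imports "HOL-Analysis.Analysis"
begin

text \<open>A point of R^D is represented as a function nat => real, only the first D
  coordinates (indices 0..D-1) being relevant; squared Euclidean distance in R^D.\<close>
definition sqdistD :: "nat \<Rightarrow> (nat \<Rightarrow> real) \<Rightarrow> (nat \<Rightarrow> real) \<Rightarrow> real" where
  "sqdistD D x y = (\<Sum>k<D. (x k - y k)^2)"

definition bip_universally_rigid ::
  "nat \<Rightarrow> nat \<Rightarrow> (nat \<Rightarrow> real^'d) \<Rightarrow> (nat \<Rightarrow> real^'d) \<Rightarrow> bool" where
  "bip_universally_rigid n m p q \<longleftrightarrow>
     (\<forall>D::nat. \<forall>P Q :: nat \<Rightarrow> nat \<Rightarrow> real.
        (\<forall>i<n. \<forall>j<m. sqdistD D (P i) (Q j) = (dist (p i) (q j))^2) \<longrightarrow>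
        (\<forall>i<n. \<forall>i'<n. sqdistD D (P i) (P i') = (dist (p i) (p i'))^2) \<and>
        (\<forall>j<m. \<forall>j'<m. sqdistD D (Q j) (Q j') = (dist (q j) (q j'))^2) \<and>
        (\<forall>i<n. \<forall>j<m. sqdistD D (P i) (Q j) = (dist (p i) (q j))^2))"

definition general_position :: "'a set \<Rightarrow> ('a \<Rightarrow> real^'d) \<Rightarrow> bool" where
  "general_position S x \<longleftrightarrow>
     (\<forall>T\<subseteq>S. 2 \<le> card T \<and> card T \<le> CARD('d) + 1 \<longrightarrow>
        inj_on x T \<and> aff_dim (x ` T) = int (card T) - 1)"

definition hat :: "real^'d \<Rightarrow> real^('d option)" where
  "hat x = (\<chi> i. case i of None \<Rightarrow> 1 | Some k \<Rightarrow> x $ k)"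

definition strictly_separated_by_quadric :: "(real^'d) set \<Rightarrow> (real^'d) set \<Rightarrow> bool" where
  "strictly_separated_by_quadric A B \<longleftrightarrow>
     (\<exists>M :: real^('d option)^('d option). transpose M = M \<and>
        (\<forall>b\<in>B. hat b \<bullet> (M *v hat b) < 0) \<and> (\<forall>a\<in>A. 0 < hat a \<bullet> (M *v hat a)))"

end

theory Submission
  imports Defs
begin


definition lin :: "real^('d option) \<Rightarrow> real^'d" where
  "lin t = (\<chi> k. t $ Some k)"
definition mk :: "real^'d \<Rightarrow> real \<Rightarrow> real^('d option)" where
  "mk w c = (\<chi> i. case i of None \<Rightarrow> c | Some k \<Rightarrow> w $ k)"

lemma UNIV_option_eq: "(UNIV :: 'a option set) = insert None (Some ` UNIV)"
  by (metis UNIV_option_conv)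

lemma inner_hat: "t \<bullet> hat x = lin t \<bullet> x + t $ None"
proof -
  have "t \<bullet> hat x = (\<Sum>i\<in>UNIV. t $ i * hat x $ i)" by (simp add: inner_vec_def)
  also have "\<dots> = t $ None * 1 + (\<Sum>i\<in>Some ` UNIV. t $ i * hat x $ i)"
    by (subst UNIV_option_eq, subst sum.insert) (auto simp: hat_def)
  also have "(\<Sum>i\<in>Some ` UNIV. t $ i * hat x $ i) = (\<Sum>k\<in>UNIV. t $ Some k * x $ k)"
    by (subst sum.reindex) (auto simp: hat_def inj_on_def)
  finally show ?thesis by (simp add: inner_vec_def lin_def)
qed

lemma lin_mk[simp]: "lin (mk w c) = w" and mk_None[simp]: "mk w c $ None = c"
  by (auto simp: lin_def mk_def vec_eq_iff)

lemma inner_mk_hat: "mk w c \<bullet> hat x = w \<bullet> x + c"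
  by (simp add: inner_hat)

lemma mk_lin: "mk (lin t) (t $ None) = t"
  by (auto simp: lin_def mk_def vec_eq_iff split: option.splits)

lemma mk_eq_0: "mk w c = 0 \<longleftrightarrow> w = 0 \<and> c = 0"
proof
  assume "mk w c = 0"
  then have "lin (mk w c) = lin 0" "mk w c $ None = 0 $ None" by simp_all
  moreover have "lin 0 = 0" by (simp add: lin_def vec_eq_iff)
  ultimately show "w = 0 \<and> c = 0" by simp
qed (simp add: mk_def vec_eq_iff split: option.splits)

lemma hat_Some[simp]: "hat x $ Some k = x $ k" and hat_None[simp]: "hat x $ None = 1"
  by (auto simp: hat_def)

lemma axis_inner_hat: "axis (Some k) 1 \<bullet> hat x = x $ k" "axis None 1 \<bullet> hat x = 1"
  by (auto simp: inner_axis')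

definition hat_span :: "(real^'d) set \<Rightarrow> bool" where
  "hat_span X \<longleftrightarrow> (\<forall>t. (\<forall>x\<in>X. t \<bullet> hat x = 0) \<longrightarrow> t = 0)"

lemma hat_spanD: "hat_span X \<Longrightarrow> (\<And>x. x \<in> X \<Longrightarrow> w \<bullet> x + c = 0) \<Longrightarrow> w = 0 \<and> c = 0"
proof -
  assume h: "hat_span X" and z: "\<And>x. x \<in> X \<Longrightarrow> w \<bullet> x + c = 0"
  have "\<forall>x\<in>X. mk w c \<bullet> hat x = 0" using z by (simp add: inner_mk_hat)
  then have "mk w c = 0" using h unfolding hat_span_def by blast
  then show ?thesis by (simp add: mk_eq_0)
qed

lemma hat_span_ne: "hat_span X \<Longrightarrow> X \<noteq> {}"
proof
  assume "hat_span X" "X = {}"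
  then have "axis None (1::real) = 0" unfolding hat_span_def by blast
  then show False by (simp add: axis_eq_0_iff)
qed



lemma ex_functional:
  fixes u :: "real^'d"
  assumes "u \<notin> affine hull S"
  shows "\<exists>t. t \<bullet> hat u \<noteq> 0 \<and> (\<forall>x\<in>S. t \<bullet> hat x = 0)"
proof (cases "S = {}")
  case True
  then show ?thesis by (intro exI[of _ "axis None 1"]) (simp add: axis_inner_hat)
next
  case False
  define F where "F = affine hull S"
  have Fne: "F \<noteq> {}" using False by (simp add: F_def)
  have cF: "closed F" "convex F" "affine F" by (auto simp: F_def affine_imp_convex)
  define z where "z = closest_point F u"
  have zF: "z \<in> F" using closest_point_in_set[OF cF(1) Fne] by (simp add: z_def)
  define w where "w = u - z"
  have orth: "w \<bullet> (x - z) = 0" if "x \<in> F" for x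
  proof -
    have 1: "w \<bullet> (x - z) \<le> 0" using closest_point_dot[OF cF(2,1) that] by (simp add: w_def z_def)
    have "(2::real) *\<^sub>R z + (-1) *\<^sub>R x \<in> F"
    proof -
      have "\<forall>x\<in>F. \<forall>y\<in>F. \<forall>u v. u + v = 1 \<longrightarrow> u *\<^sub>R x + v *\<^sub>R y \<in> F"
        using cF(3) unfolding affine_def by blast
      then show ?thesis using zF that by (metis add.commute diff_add_cancel one_add_one uminus_add_conv_diff)
    qed
    then have "w \<bullet> (((2::real) *\<^sub>R z + (-1) *\<^sub>R x) - z) \<le> 0"
      using closest_point_dot[OF cF(2,1)] by (simp add: w_def z_def)
    moreover have "((2::real) *\<^sub>R z + (-1) *\<^sub>R x) - z = -(x - z)"
      by (simp add: algebra_simps scaleR_2)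
    ultimately have "w \<bullet> (-(x - z)) \<le> 0" by metis
    then have "- (w \<bullet> (x - z)) \<le> 0" by (simp only: inner_minus_right)
    with 1 show ?thesis by linarith
  qed
  have "u \<noteq> z" using assms zF by (auto simp: F_def)
  then have wne: "w \<bullet> w \<noteq> 0" by (simp add: w_def)
  define t where "t = mk w (- (w \<bullet> z))"
  have th: "t \<bullet> hat x = w \<bullet> (x - z)" for x
    by (simp add: t_def inner_mk_hat inner_diff_right)
  show ?thesis
  proof (intro exI[of _ t] conjI ballI)
    show "t \<bullet> hat u \<noteq> 0" using wne by (simp add: th w_def)
    fix x assume "x \<in> S"
    then have "x \<in> F" by (simp add: F_def hull_inc)
    then show "t \<bullet> hat x = 0" by (simp add: th orth)
  qed
qed

lemma hat_span_hull:
  assumes "hat_span (X :: (real^'d) set)"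
  shows "affine hull X = UNIV"
proof (rule ccontr)
  assume "affine hull X \<noteq> UNIV"
  then obtain u where "u \<notin> affine hull X" by blast
  from ex_functional[OF this] obtain t where "t \<bullet> hat u \<noteq> 0" "\<forall>x\<in>X. t \<bullet> hat x = 0" by blast
  with assms show False unfolding hat_span_def by auto
qed

lemma hat_span_mono: "hat_span X \<Longrightarrow> X \<subseteq> Y \<Longrightarrow> hat_span Y"
  unfolding hat_span_def by blast



definition outer :: "real^'n \<Rightarrow> real^'n^'n" where
  "outer t = (\<chi> i j. t$i * t$j)"

lemma quad_sum: fixes M :: "real^'n^'n" shows "t \<bullet> (M *v t) = (\<Sum>i\<in>UNIV. \<Sum>j\<in>UNIV. M$i$j * t$i * t$j)"
  by (simp add: inner_vec_def matrix_vector_mult_def sum_distrib_left mult_ac)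

lemma quad_transpose: fixes M :: "real^'n^'n" shows "t \<bullet> (transpose M *v t) = t \<bullet> (M *v t)"
proof -
  have "t \<bullet> (transpose M *v t) = (\<Sum>i\<in>UNIV. \<Sum>j\<in>UNIV. M$j$i * t$i * t$j)"
    by (simp only: quad_sum) (simp add: transpose_def)
  also have "\<dots> = (\<Sum>j\<in>UNIV. \<Sum>i\<in>UNIV. M$j$i * t$i * t$j)" by (rule sum.swap)
  finally show ?thesis by (simp add: quad_sum mult_ac)
qed

lemma inner_outer: fixes M :: "real^'n^'n" shows "M \<bullet> outer t = t \<bullet> (M *v t)"
  unfolding quad_sum by (simp add: inner_vec_def outer_def mult_ac)

lemma outer_ent: "outer t $ i $ j = t$i * t$j" by (simp add: outer_def)

lemma gordan:
  fixes p q :: "nat \<Rightarrow> real^'d"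
  assumes fin: "finite I" "finite J"
    and inj: "inj_on (\<lambda>k. case k of Inl i \<Rightarrow> p i | Inr j \<Rightarrow> q j) (Inl ` I \<union> Inr ` J)"
    and ns: "\<not> strictly_separated_by_quadric (p ` I) (q ` J)"
  shows "\<exists>la mu. (\<forall>a\<in>I. 0 \<le> la a) \<and> (\<forall>b\<in>J. 0 \<le> mu b) \<and> sum la I + sum mu J = 1 \<and>
     (\<forall>M. (\<Sum>a\<in>I. la a * (hat (p a) \<bullet> (M *v hat (p a)))) = (\<Sum>b\<in>J. mu b * (hat (q b) \<bullet> (M *v hat (q b)))))"
proof -
  define x where "x = (\<lambda>k. case k of Inl i \<Rightarrow> p i | Inr j \<Rightarrow> q j)"
  define U where "U = Inl ` I \<union> Inr ` J"
  define s :: "nat + nat \<Rightarrow> real" where "s = (\<lambda>k. case k of Inl i \<Rightarrow> 1 | Inr j \<Rightarrow> -1)"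
  define v where "v = (\<lambda>k. s k *\<^sub>R outer (hat (x k)))"
  have finU: "finite U" using fin by (simp add: U_def)
  have s2: "s k = 1 \<or> s k = -1" for k by (cases k) (auto simp: s_def)
  have injv: "inj_on v U"
  proof (rule inj_onI)
    fix k1 k2 assume k: "k1 \<in> U" "k2 \<in> U" "v k1 = v k2"
    have e1: "v k $ None $ None = s k" for k by (simp add: v_def outer_ent)
    have e2: "v k $ Some i $ None = s k * x k $ i" for k i by (simp add: v_def outer_ent)
    have "s k1 = s k2" using e1 k(3) by metis
    moreover have "s k1 * x k1 $ i = s k2 * x k2 $ i" for i using e2 k(3) by metis
    ultimately have "x k1 $ i = x k2 $ i" for i using s2[of k1] by (metis mult_cancel_left zero_neq_neg_one zero_neq_one)
    then have "x k1 = x k2" by (simp add: vec_eq_iff)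
    then show "k1 = k2" using inj k(1,2) unfolding inj_on_def x_def U_def by blast
  qed
  define V where "V = v ` U"
  have finV: "finite V" using finU by (simp add: V_def)
  have "0 \<in> convex hull V"
  proof (rule ccontr)
    assume "0 \<notin> convex hull V"
    moreover have "convex (convex hull V)" "closed (convex hull V)"
      using finV by (auto intro: compact_imp_closed finite_imp_compact_convex_hull)
    ultimately obtain N b where Nb: "0 < b" "\<forall>y\<in>convex hull V. N \<bullet> y > b"
      using separating_hyperplane_closed_0 by blast
    have pos: "N \<bullet> v k > 0" if "k \<in> U" for k
      using Nb that hull_inc[of "v k" V] by (force simp: V_def)
    define M where "M = (1/2::real) *\<^sub>R (N + transpose N)"
    have symM: "transpose M = M"
      by (simp add: M_def transpose_def vec_eq_iff)
    have qM: "t \<bullet> (M *v t) = N \<bullet> outer t" for t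
    proof -
      have "M *v t = (1/2::real) *\<^sub>R (N *v t + transpose N *v t)"
        by (simp add: M_def matrix_vector_mult_def vec_eq_iff sum_distrib_left sum.distrib algebra_simps)
      then have "t \<bullet> (M *v t) = (1/2) * (t \<bullet> (N *v t) + t \<bullet> (transpose N *v t))"
        by (simp only: inner_add_right inner_scaleR_right)
      then show ?thesis by (simp only: quad_transpose inner_outer) simp
    qed
    have "strictly_separated_by_quadric (p ` I) (q ` J)"
      unfolding strictly_separated_by_quadric_def
    proof (intro exI[of _ M] conjI symM ballI)
      fix b assume "b \<in> q ` J"
      then obtain j where j: "j \<in> J" "b = q j" by blast
      have "N \<bullet> v (Inr j) > 0" using pos j by (simp add: U_def)
      then show "hat b \<bullet> (M *v hat b) < 0" using j by (simp add: qM v_def s_def x_def)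
    next
      fix a assume "a \<in> p ` I"
      then obtain i where i: "i \<in> I" "a = p i" by blast
      have "N \<bullet> v (Inl i) > 0" using pos i by (simp add: U_def)
      then show "0 < hat a \<bullet> (M *v hat a)" using i by (simp add: qM v_def s_def x_def)
    qed
    with ns show False by blast
  qed
  then obtain u where u: "\<forall>y\<in>V. 0 \<le> u y" "sum u V = 1" "(\<Sum>y\<in>V. u y *\<^sub>R y) = 0"
    using convex_hull_finite[OF finV] by blast
  define c where "c = (\<lambda>k. u (v k))"
  have c1: "sum c U = 1" using u(2) injv by (simp add: V_def c_def sum.reindex)
  have c0: "(\<Sum>k\<in>U. c k *\<^sub>R v k) = 0" using u(3) injv by (simp add: V_def c_def sum.reindex)
  have disj: "Inl ` I \<inter> Inr ` J = {}" by auto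
  have splitU: "(\<Sum>k\<in>U. f k) = (\<Sum>a\<in>I. f (Inl a)) + (\<Sum>b\<in>J. f (Inr b))" for f :: "_ \<Rightarrow> 'z::comm_monoid_add"
    unfolding U_def using fin disj by (simp add: sum.union_disjoint sum.reindex)
  define la where "la = (\<lambda>a. c (Inl a))"
  define mu where "mu = (\<lambda>b. c (Inr b))"
  have h1: "\<forall>a\<in>I. 0 \<le> la a" using u(1) by (simp add: la_def c_def V_def U_def)
  have h2: "\<forall>b\<in>J. 0 \<le> mu b" using u(1) by (simp add: mu_def c_def V_def U_def)
  have h3: "sum la I + sum mu J = 1" using c1 splitU[of c] by (simp add: la_def mu_def)
  have h4: "(\<Sum>a\<in>I. la a * (hat (p a) \<bullet> (M *v hat (p a)))) = (\<Sum>b\<in>J. mu b * (hat (q b) \<bullet> (M *v hat (q b))))"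
    for M :: "real^('d option)^('d option)"
  proof -
    have "0 = M \<bullet> (\<Sum>k\<in>U. c k *\<^sub>R v k)" using c0 by simp
    also have "\<dots> = (\<Sum>k\<in>U. c k * (M \<bullet> v k))" by (simp add: inner_sum_right)
    also have "\<dots> = (\<Sum>a\<in>I. la a * (hat (p a) \<bullet> (M *v hat (p a)))) - (\<Sum>b\<in>J. mu b * (hat (q b) \<bullet> (M *v hat (q b))))"
      by (simp add: splitU v_def s_def x_def la_def mu_def inner_outer sum_negf)
    finally show ?thesis by simp
  qed
  show ?thesis using h1 h2 h3 h4 by blast
qed



lemma quad_bilin:
  fixes t th et :: "real^'n"
  shows "t \<bullet> ((\<chi> i j. th$i * et$j) *v t) = (th \<bullet> t) * (et \<bullet> t)"
  by (subst quad_sum, simp only: inner_vec_def sum_product) (simp add: mult_ac)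

locale frm =
  fixes p q :: "nat \<Rightarrow> real^'d" and I J :: "nat set" and la mu :: "nat \<Rightarrow> real"
  assumes finI: "finite I" and finJ: "finite J"
    and nnl: "\<And>a. a \<in> I \<Longrightarrow> 0 \<le> la a" and nnm: "\<And>b. b \<in> J \<Longrightarrow> 0 \<le> mu b"
    and tot: "sum la I + sum mu J = 1"
    and MI: "\<And>th et. (\<Sum>a\<in>I. la a * ((th \<bullet> hat (p a)) * (et \<bullet> hat (p a))))
               = (\<Sum>b\<in>J. mu b * ((th \<bullet> hat (q b)) * (et \<bullet> hat (q b))))"
    and gp: "general_position (Inl ` I \<union> Inr ` J) (\<lambda>k. case k of Inl i \<Rightarrow> p i | Inr j \<Rightarrow> q j)"
begin

definition "A0 = {a\<in>I. 0 < la a}"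
definition "B0 = {b\<in>J. 0 < mu b}"

lemma MI2: "(\<Sum>a\<in>I. la a * (th \<bullet> hat (p a))^2) = (\<Sum>b\<in>J. mu b * (th \<bullet> hat (q b))^2)"
  using MI[of th th] by (simp add: power2_eq_square)

lemma zero_sum_A:
  assumes "\<And>a. a \<in> A0 \<Longrightarrow> th \<bullet> hat (p a) = 0"
  shows "(\<Sum>a\<in>I. la a * (th \<bullet> hat (p a))^2) = 0"
proof (rule sum.neutral, rule ballI)
  fix a assume a: "a \<in> I"
  show "la a * (th \<bullet> hat (p a))^2 = 0"
  proof (cases "0 < la a")
    case True then show ?thesis using assms a by (simp add: A0_def)
  next
    case False then show ?thesis using nnl[OF a] by simp
  qed
qed

lemma zero_sum_B:
  assumes "\<And>b. b \<in> B0 \<Longrightarrow> th \<bullet> hat (q b) = 0"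
  shows "(\<Sum>b\<in>J. mu b * (th \<bullet> hat (q b))^2) = 0"
proof (rule sum.neutral, rule ballI)
  fix b assume b: "b \<in> J"
  show "mu b * (th \<bullet> hat (q b))^2 = 0"
  proof (cases "0 < mu b")
    case True then show ?thesis using assms b by (simp add: B0_def)
  next
    case False then show ?thesis using nnm[OF b] by simp
  qed
qed

lemma sumA_zero_D:
  assumes "(\<Sum>a\<in>I. la a * (th \<bullet> hat (p a))^2) = 0" "a \<in> A0"
  shows "th \<bullet> hat (p a) = 0"
proof -
  have "\<forall>a\<in>I. la a * (th \<bullet> hat (p a))^2 = 0"
    using assms(1) sum_nonneg_eq_0_iff[OF finI, of "\<lambda>a. la a * (th \<bullet> hat (p a))^2"] nnl by simp
  then show ?thesis using assms(2) by (auto simp: A0_def)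
qed

lemma sumB_zero_D:
  assumes "(\<Sum>b\<in>J. mu b * (th \<bullet> hat (q b))^2) = 0" "b \<in> B0"
  shows "th \<bullet> hat (q b) = 0"
proof -
  have "\<forall>b\<in>J. mu b * (th \<bullet> hat (q b))^2 = 0"
    using assms(1) sum_nonneg_eq_0_iff[OF finJ, of "\<lambda>b. mu b * (th \<bullet> hat (q b))^2"] nnm by simp
  then show ?thesis using assms(2) by (auto simp: B0_def)
qed

lemma transferA:
  assumes "\<And>a. a \<in> A0 \<Longrightarrow> th \<bullet> hat (p a) = 0" "b \<in> B0"
  shows "th \<bullet> hat (q b) = 0"
  using sumB_zero_D[OF _ assms(2)] zero_sum_A[OF assms(1)] MI2 by metis

lemma transferB:
  assumes "\<And>b. b \<in> B0 \<Longrightarrow> th \<bullet> hat (q b) = 0" "a \<in> A0"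
  shows "th \<bullet> hat (p a) = 0"
  using sumA_zero_D[OF _ assms(2)] zero_sum_B[OF assms(1)] MI2 by metis

lemma A0_sub: "A0 \<subseteq> I" and B0_sub: "B0 \<subseteq> J"
  by (auto simp: A0_def B0_def)

lemma finA0: "finite A0" and finB0: "finite B0"
  using finI finJ A0_sub B0_sub finite_subset by blast+

lemma not_both_empty: "A0 \<noteq> {} \<or> B0 \<noteq> {}"
proof (rule ccontr)
  assume "\<not> ?thesis"
  then have e: "A0 = {}" "B0 = {}" by auto
  have "\<forall>a\<in>I. la a = 0" using e(1) nnl by (force simp: A0_def)
  moreover have "\<forall>b\<in>J. mu b = 0" using e(2) nnm by (force simp: B0_def)
  ultimately show False using tot by simp
qed

lemma vanish_both_zero:
  assumes A: "\<And>a. a \<in> A0 \<Longrightarrow> th \<bullet> hat (p a) = 0"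
    and B: "\<And>b. b \<in> B0 \<Longrightarrow> th \<bullet> hat (q b) = 0"
  shows "th = 0"
proof (rule ccontr)
  assume thne: "th \<noteq> 0"
  define x where "x = (\<lambda>k. case k of Inl i \<Rightarrow> p i | Inr j \<Rightarrow> q j)"
  define U0 where "U0 = Inl ` A0 \<union> Inr ` B0"
  have U0sub: "U0 \<subseteq> Inl ` I \<union> Inr ` J" using A0_sub B0_sub by (auto simp: U0_def)
  have finU0: "finite U0" using finA0 finB0 by (simp add: U0_def)
  have vanish: "th \<bullet> hat (x u) = 0" if "u \<in> U0" for u
    using that A B by (auto simp: U0_def x_def)
  have U0ne: "U0 \<noteq> {}" using not_both_empty by (auto simp: U0_def)
  have gp': "\<And>T. T \<subseteq> Inl ` I \<union> Inr ` J \<Longrightarrow> 2 \<le> card T \<Longrightarrow> card T \<le> CARD('d) + 1 \<Longrightarrow>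
        inj_on x T \<and> aff_dim (x ` T) = int (card T) - 1"
    using gp unfolding general_position_def x_def by blast
  define w where "w = lin th"
  define c where "c = th $ None"
  have hx: "th \<bullet> hat y = w \<bullet> y + c" for y by (simp add: inner_hat w_def c_def)
  have wne: "w \<noteq> 0"
  proof
    assume w0: "w = 0"
    obtain u where "u \<in> U0" using U0ne by blast
    then have "c = 0" using vanish[of u] hx w0 by simp
    then have "th = mk 0 0" using w0 mk_lin[of th] by (simp add: w_def c_def)
    then show False using thne mk_eq_0 by blast
  qed
  have sub: "x ` U0 \<subseteq> {y. w \<bullet> y = - c}" using vanish hx by force
  have cardle: "card U0 \<le> CARD('d)"
  proof (rule ccontr)
    assume "\<not> ?thesis"
    then have "CARD('d) + 1 \<le> card U0" by simp
    then obtain T where T: "T \<subseteq> U0" "card T = CARD('d) + 1"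
      using obtain_subset_with_card_n by metis
    have "2 \<le> card T" using T(2) by simp
    then have "aff_dim (x ` T) = int (CARD('d) + 1) - 1" using gp'[of T] T U0sub by auto
    moreover have "aff_dim (x ` T) \<le> aff_dim {y. w \<bullet> y = - c}"
      using T(1) sub by (intro aff_dim_subset) auto
    moreover have "aff_dim {y. w \<bullet> y = - c} = int CARD('d) - 1" using wne by simp
    ultimately show False by simp
  qed
  obtain u0 where u0: "u0 \<in> U0" using U0ne by blast
  have notin: "x u0 \<notin> affine hull (x ` (U0 - {u0}))"
  proof (cases "card U0 = 1")
    case True
    then have "U0 = {u0}" using u0 by (metis card_1_singletonE singletonD)
    then show ?thesis by simp
  next
    case False
    moreover have "card U0 \<noteq> 0" using U0ne finU0 by simp
    ultimately have "2 \<le> card U0" by linarith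
    then have g: "inj_on x U0" "aff_dim (x ` U0) = int (card U0) - 1"
      using gp'[OF U0sub] cardle by auto
    then have "aff_dim (x ` U0) = int (card (x ` U0)) - 1" by (simp add: card_image)
    then have "\<not> affine_dependent (x ` U0)" using finU0 by (simp add: affine_independent_iff_card)
    then have "x u0 \<notin> affine hull (x ` U0 - {x u0})" using u0 unfolding affine_dependent_def by blast
    moreover have "x ` U0 - {x u0} = x ` (U0 - {u0})" using g(1) u0 by (auto simp: inj_on_def)
    ultimately show ?thesis by simp
  qed
  obtain t where t: "t \<bullet> hat (x u0) \<noteq> 0" "\<forall>y\<in>x ` (U0 - {u0}). t \<bullet> hat y = 0"
    using ex_functional[OF notin] by blast
  show False
  proof (cases u0)
    case (Inl a0)
    have a0: "a0 \<in> A0" using u0 Inl by (auto simp: U0_def)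
    have tb: "t \<bullet> hat (q b) = 0" if "b \<in> B0" for b
      using t(2) that Inl by (force simp: U0_def x_def)
    have "t \<bullet> hat (p a0) = 0" using transferB[OF tb a0] .
    then show False using t(1) Inl by (simp add: x_def)
  next
    case (Inr b0)
    have b0: "b0 \<in> B0" using u0 Inr by (auto simp: U0_def)
    have ta: "t \<bullet> hat (p a) = 0" if "a \<in> A0" for a
      using t(2) that Inr by (force simp: U0_def x_def)
    have "t \<bullet> hat (q b0) = 0" using transferA[OF ta b0] .
    then show False using t(1) Inr by (simp add: x_def)
  qed
qed

lemma spanA: "hat_span (p ` A0)"
  unfolding hat_span_def
proof (intro allI impI)
  fix th assume h: "\<forall>x\<in>p ` A0. th \<bullet> hat x = 0"
  then have A: "\<And>a. a \<in> A0 \<Longrightarrow> th \<bullet> hat (p a) = 0" by blast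
  show "th = 0" using vanish_both_zero[OF A transferA[OF A]] .
qed

lemma spanB: "hat_span (q ` B0)"
  unfolding hat_span_def
proof (intro allI impI)
  fix th assume h: "\<forall>x\<in>q ` B0. th \<bullet> hat x = 0"
  then have B: "\<And>b. b \<in> B0 \<Longrightarrow> th \<bullet> hat (q b) = 0" by blast
  show "th = 0" using vanish_both_zero[OF transferB[OF B] B] .
qed

end



context frm begin

definition G :: "real^('d option) \<Rightarrow> real^('d option)" where
  "G th = (\<Sum>b\<in>J. (mu b * (th \<bullet> hat (q b))) *\<^sub>R hat (q b))"

lemma G_linear: "linear G"
  unfolding G_def
  by (rule linearI) (simp_all add: inner_add_left scaleR_add_left sum.distrib algebra_simps scaleR_sum_right)

lemma G_inner: "et \<bullet> G th = (\<Sum>b\<in>J. mu b * ((th \<bullet> hat (q b)) * (et \<bullet> hat (q b))))"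
  unfolding G_def by (simp add: inner_sum_right mult_ac)

lemma G_inj: "inj G"
proof -
  have "th = 0" if "G th = 0" for th
  proof -
    have "th \<bullet> G th = 0" using that by simp
    then have "(\<Sum>b\<in>J. mu b * (th \<bullet> hat (q b))^2) = 0" by (simp add: G_inner power2_eq_square)
    then have "\<forall>x\<in>q ` B0. th \<bullet> hat x = 0" using sumB_zero_D by blast
    then show ?thesis using spanB unfolding hat_span_def by blast
  qed
  then show ?thesis using G_linear by (simp add: linear_injective_0)
qed

lemma G_surj: "surj G"
  using linear_inj_imp_surj[OF G_linear G_inj] .

lemma G_eqD: "G s = G t \<Longrightarrow> s = t"
  using G_inj by (simp add: inj_eq)

definition tb :: "nat \<Rightarrow> real^('d option)" where
  "tb b = (SOME t. G t = mu b *\<^sub>R hat (q b))"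

lemma G_tb: "G (tb b) = mu b *\<^sub>R hat (q b)"
proof -
  obtain t where "G t = mu b *\<^sub>R hat (q b)" using G_surj by (metis surjD)
  then show ?thesis unfolding tb_def by (rule someI)
qed

definition Th :: "(nat \<Rightarrow> real) \<Rightarrow> real^('d option)" where
  "Th y = (\<Sum>b\<in>J. y b *\<^sub>R tb b)"

lemma G_Th: "G (Th y) = (\<Sum>b\<in>J. (y b * mu b) *\<^sub>R hat (q b))"
  unfolding Th_def by (simp add: linear_sum[OF G_linear] linear_scale[OF G_linear] G_tb o_def)

lemma e_hat: "axis None 1 \<bullet> hat x = 1" by (simp add: axis_inner_hat)
lemma e_hat': "hat x \<bullet> axis None 1 = 1" using e_hat[of x] by (simp only: inner_commute)

lemma F1: "(\<Sum>b\<in>J. tb b) = axis None 1"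
proof (rule G_eqD)
  have "G (\<Sum>b\<in>J. tb b) = (\<Sum>b\<in>J. mu b *\<^sub>R hat (q b))"
    by (simp add: linear_sum[OF G_linear] G_tb o_def)
  also have "\<dots> = G (axis None 1)" by (simp add: G_def e_hat)
  finally show "G (\<Sum>b\<in>J. tb b) = G (axis None 1)" .
qed

lemma F1': "(\<Sum>b\<in>J. hat x \<bullet> tb b) = 1"
  using F1 by (metis inner_sum_right e_hat inner_commute)

lemma F2: "(\<Sum>a\<in>I. la a * (hat (p a) \<bullet> tb b)) = mu b"
proof -
  have "(\<Sum>a\<in>I. la a * (hat (p a) \<bullet> tb b)) = (\<Sum>a\<in>I. la a * ((axis None 1 \<bullet> hat (p a)) * (tb b \<bullet> hat (p a))))"
    by (simp add: e_hat e_hat' inner_commute)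
  also have "\<dots> = (\<Sum>b'\<in>J. mu b' * ((axis None 1 \<bullet> hat (q b')) * (tb b \<bullet> hat (q b'))))" by (rule MI)
  also have "\<dots> = axis None 1 \<bullet> G (tb b)" by (simp add: G_inner mult_ac)
  also have "\<dots> = mu b" by (simp add: G_tb e_hat)
  finally show ?thesis .
qed

lemma F5: "(\<Sum>b\<in>J. mu b * (y b * (Th y \<bullet> hat (q b)))) = (\<Sum>b\<in>J. mu b * (Th y \<bullet> hat (q b))^2)"
proof -
  have "Th y \<bullet> G (Th y) = (\<Sum>b\<in>J. mu b * (y b * (Th y \<bullet> hat (q b))))"
    by (simp add: G_Th inner_sum_right mult_ac)
  moreover have "Th y \<bullet> G (Th y) = (\<Sum>b\<in>J. mu b * (Th y \<bullet> hat (q b))^2)"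
    by (simp add: G_inner power2_eq_square)
  ultimately show ?thesis by simp
qed

lemma Th_coord: "Th (\<lambda>b. q b $ k) = axis (Some k) 1"
proof (rule G_eqD)
  show "G (Th (\<lambda>b. q b $ k)) = G (axis (Some k) 1)"
    by (simp only: G_Th) (simp add: G_def axis_inner_hat mult_ac)
qed

definition om :: "nat \<Rightarrow> nat \<Rightarrow> real" where
  "om a b = la a * (hat (p a) \<bullet> tb b)"

lemma energy:
  "(\<Sum>a\<in>I. \<Sum>b\<in>J. om a b * (xx a - y b)^2) =
   (\<Sum>a\<in>I. la a * (xx a - Th y \<bullet> hat (p a))^2) + (\<Sum>b\<in>J. mu b * (y b - Th y \<bullet> hat (q b))^2)"
proof -
  have L: "(\<Sum>a\<in>I. \<Sum>b\<in>J. om a b * (xx a - y b)^2) =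
     (\<Sum>a\<in>I. la a * xx a^2 * (\<Sum>b\<in>J. hat (p a) \<bullet> tb b))
     - 2 * (\<Sum>a\<in>I. la a * xx a * (\<Sum>b\<in>J. y b * (hat (p a) \<bullet> tb b)))
     + (\<Sum>b\<in>J. y b^2 * (\<Sum>a\<in>I. la a * (hat (p a) \<bullet> tb b)))"
  proof -
    have "(\<Sum>a\<in>I. \<Sum>b\<in>J. om a b * (xx a - y b)^2) =
      (\<Sum>a\<in>I. \<Sum>b\<in>J. la a * xx a^2 * (hat (p a) \<bullet> tb b) - 2 * (la a * xx a * (y b * (hat (p a) \<bullet> tb b)))
          + y b^2 * (la a * (hat (p a) \<bullet> tb b)))"
      by (intro sum.cong refl) (simp add: om_def power2_diff algebra_simps)
    also have "\<dots> = (\<Sum>a\<in>I. la a * xx a^2 * (\<Sum>b\<in>J. hat (p a) \<bullet> tb b))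
     - 2 * (\<Sum>a\<in>I. la a * xx a * (\<Sum>b\<in>J. y b * (hat (p a) \<bullet> tb b)))
     + (\<Sum>a\<in>I. \<Sum>b\<in>J. y b^2 * (la a * (hat (p a) \<bullet> tb b)))"
      by (simp add: sum.distrib sum_subtractf sum_distrib_left)
    also have "(\<Sum>a\<in>I. \<Sum>b\<in>J. y b^2 * (la a * (hat (p a) \<bullet> tb b))) = (\<Sum>b\<in>J. y b^2 * (\<Sum>a\<in>I. la a * (hat (p a) \<bullet> tb b)))"
      by (subst sum.swap) (simp add: sum_distrib_left)
    finally show ?thesis .
  qed
  have L2: "(\<Sum>a\<in>I. \<Sum>b\<in>J. om a b * (xx a - y b)^2) =
     (\<Sum>a\<in>I. la a * xx a^2) - 2 * (\<Sum>a\<in>I. la a * xx a * (Th y \<bullet> hat (p a))) + (\<Sum>b\<in>J. mu b * y b^2)"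
    unfolding L F1' F2
    by (simp add: Th_def inner_sum_right inner_commute mult_ac)
  have R: "(\<Sum>a\<in>I. la a * (xx a - Th y \<bullet> hat (p a))^2) + (\<Sum>b\<in>J. mu b * (y b - Th y \<bullet> hat (q b))^2)
     = (\<Sum>a\<in>I. la a * xx a^2) - 2 * (\<Sum>a\<in>I. la a * xx a * (Th y \<bullet> hat (p a))) + (\<Sum>a\<in>I. la a * (Th y \<bullet> hat (p a))^2)
       + ((\<Sum>b\<in>J. mu b * y b^2) - 2 * (\<Sum>b\<in>J. mu b * (y b * (Th y \<bullet> hat (q b)))) + (\<Sum>b\<in>J. mu b * (Th y \<bullet> hat (q b))^2))"
    by (simp add: power2_diff algebra_simps sum.distrib sum_subtractf sum_distrib_left)
  show ?thesis unfolding L2 R F5 MI2 by simp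
qed

end


lemma dist_sq_inner: "(dist x y)^2 = (x - y) \<bullet> (x - y)"
  by (simp add: dist_norm power2_norm_eq_inner)

lemma dist_sq_vec: "(dist x y)^2 = (\<Sum>c\<in>UNIV. (x $ c - y $ c)^2)" for x y :: "real^'n"
  unfolding dist_sq_inner by (simp add: inner_vec_def power2_eq_square)

context frm begin

lemma energy_nonneg: "0 \<le> (\<Sum>a\<in>I. \<Sum>b\<in>J. om a b * (xx a - y b)^2)"
  unfolding energy using nnl nnm by (intro add_nonneg_nonneg sum_nonneg) auto

lemma energy_zero:
  assumes "(\<Sum>a\<in>I. \<Sum>b\<in>J. om a b * (xx a - y b)^2) = 0"
  shows "\<And>a. a \<in> A0 \<Longrightarrow> xx a = Th y \<bullet> hat (p a)"
    and "\<And>b. b \<in> B0 \<Longrightarrow> y b = Th y \<bullet> hat (q b)"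
proof -
  have n1: "0 \<le> (\<Sum>a\<in>I. la a * (xx a - Th y \<bullet> hat (p a))^2)" using nnl by (intro sum_nonneg) auto
  have n2: "0 \<le> (\<Sum>b\<in>J. mu b * (y b - Th y \<bullet> hat (q b))^2)" using nnm by (intro sum_nonneg) auto
  have s1: "(\<Sum>a\<in>I. la a * (xx a - Th y \<bullet> hat (p a))^2) = 0" and s2: "(\<Sum>b\<in>J. mu b * (y b - Th y \<bullet> hat (q b))^2) = 0"
    using assms n1 n2 unfolding energy by linarith+
  have "\<forall>a\<in>I. la a * (xx a - Th y \<bullet> hat (p a))^2 = 0"
    using s1 sum_nonneg_eq_0_iff[OF finI] nnl by (simp add: sum_nonneg_eq_0_iff[OF finI])
  then show "\<And>a. a \<in> A0 \<Longrightarrow> xx a = Th y \<bullet> hat (p a)" by (auto simp: A0_def)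
  have "\<forall>b\<in>J. mu b * (y b - Th y \<bullet> hat (q b))^2 = 0"
    using s2 nnm by (simp add: sum_nonneg_eq_0_iff[OF finJ])
  then show "\<And>b. b \<in> B0 \<Longrightarrow> y b = Th y \<bullet> hat (q b)" by (auto simp: B0_def)
qed

lemma energy_orig: "(\<Sum>a\<in>I. \<Sum>b\<in>J. om a b * (p a $ c - q b $ c)^2) = 0"
  unfolding energy[of "\<lambda>a. p a $ c" "\<lambda>b. q b $ c"] Th_coord by (simp add: axis_inner_hat)

lemma energy_orig_sum: "(\<Sum>a\<in>I. \<Sum>b\<in>J. om a b * (dist (p a) (q b))^2) = 0"
proof -
  have "(\<Sum>a\<in>I. \<Sum>b\<in>J. om a b * (dist (p a) (q b))^2)
      = (\<Sum>a\<in>I. \<Sum>b\<in>J. \<Sum>c\<in>UNIV. om a b * (p a $ c - q b $ c)^2)"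
    by (simp add: dist_sq_vec sum_distrib_left)
  also have "\<dots> = (\<Sum>c\<in>UNIV. \<Sum>a\<in>I. \<Sum>b\<in>J. om a b * (p a $ c - q b $ c)^2)"
    by (subst sum.swap, subst (2) sum.swap) (rule refl)
  also have "\<dots> = 0" by (simp add: energy_orig)
  finally show ?thesis .
qed

lemma rigid:
  assumes subI: "I \<subseteq> {..<n}" and subJ: "J \<subseteq> {..<m}"
    and bars: "\<forall>i<n. \<forall>j<m. sqdistD D (P i) (Q j) = (dist (p i) (q j))^2"
  shows "(\<forall>i<n. \<forall>i'<n. sqdistD D (P i) (P i') = (dist (p i) (p i'))^2) \<and>
         (\<forall>j<m. \<forall>j'<m. sqdistD D (Q j) (Q j') = (dist (q j) (q j'))^2)"
proof -
  have bars': "sqdistD D (P i) (Q j) = (dist (p i) (q j))^2" if "i < n" "j < m" for i j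
    using bars that by blast
  define Tk where "Tk k = Th (\<lambda>b. Q b k)" for k
  define E where "E k = (\<Sum>a\<in>I. \<Sum>b\<in>J. om a b * (P a k - Q b k)^2)" for k
  have Esum: "(\<Sum>k<D. E k) = 0"
  proof -
    have "(\<Sum>k<D. E k) = (\<Sum>k<D. \<Sum>a\<in>I. \<Sum>b\<in>J. om a b * (P a k - Q b k)^2)" by (simp add: E_def)
    also have "\<dots> = (\<Sum>a\<in>I. \<Sum>k<D. \<Sum>b\<in>J. om a b * (P a k - Q b k)^2)" by (rule sum.swap)
    also have "\<dots> = (\<Sum>a\<in>I. \<Sum>b\<in>J. \<Sum>k<D. om a b * (P a k - Q b k)^2)"
      by (rule sum.cong[OF refl], rule sum.swap)
    also have "\<dots> = (\<Sum>a\<in>I. \<Sum>b\<in>J. om a b * sqdistD D (P a) (Q b))"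
      by (simp add: sqdistD_def sum_distrib_left)
    also have "\<dots> = (\<Sum>a\<in>I. \<Sum>b\<in>J. om a b * (dist (p a) (q b))^2)"
      using subI subJ bars' by (intro sum.cong refl) auto
    also have "\<dots> = 0" by (rule energy_orig_sum)
    finally show ?thesis .
  qed
  have Enn: "0 \<le> E k" for k by (simp add: E_def energy_nonneg)
  have E0: "E k = 0" if "k < D" for k
    using Esum Enn that by (simp add: sum_nonneg_eq_0_iff)
  have PA: "P a k = Tk k \<bullet> hat (p a)" if "a \<in> A0" "k < D" for a k
    using energy_zero(1)[of "\<lambda>a. P a k" "\<lambda>b. Q b k"] E0[OF that(2)] that(1) by (simp add: E_def Tk_def)
  have QB: "Q b k = Tk k \<bullet> hat (q b)" if "b \<in> B0" "k < D" for b k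
    using energy_zero(2)[of "\<lambda>a. P a k" "\<lambda>b. Q b k"] E0[OF that(2)] that(1) by (simp add: E_def Tk_def)
  define l where "l k = lin (Tk k)" for k
  have Tdiff: "Tk k \<bullet> hat x - Tk k \<bullet> hat y = l k \<bullet> (x - y)" for k x y
    by (simp add: inner_hat l_def inner_diff_right)
  have isoAB: "(\<Sum>k<D. (l k \<bullet> (p a - q b))^2) = (p a - q b) \<bullet> (p a - q b)" if "a \<in> A0" "b \<in> B0" for a b
  proof -
    have "a < n" "b < m" using that subI subJ A0_sub B0_sub by auto
    then have "sqdistD D (P a) (Q b) = (p a - q b) \<bullet> (p a - q b)" using bars' dist_sq_inner by metis
    moreover have "sqdistD D (P a) (Q b) = (\<Sum>k<D. (l k \<bullet> (p a - q b))^2)"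
      unfolding sqdistD_def using that by (intro sum.cong refl) (simp add: PA QB Tdiff)
    ultimately show ?thesis by simp
  qed
  define Mop where "Mop v = (\<Sum>k<D. (l k \<bullet> v) *\<^sub>R l k) - v" for v
  have Minner: "u \<bullet> Mop v = (\<Sum>k<D. (l k \<bullet> u) * (l k \<bullet> v)) - u \<bullet> v" for u v
    by (simp add: Mop_def inner_diff_right inner_sum_right mult_ac inner_commute)
  have Msym: "u \<bullet> Mop v = v \<bullet> Mop u" for u v by (simp add: Minner mult_ac inner_commute)
  have Mdiff: "Mop (u - v) = Mop u - Mop v" for u v
    by (simp add: Mop_def inner_diff_right scaleR_diff_left sum_subtractf)
  have Mquad: "v \<bullet> Mop v = (\<Sum>k<D. (l k \<bullet> v)^2) - v \<bullet> v" for v by (simp add: Minner power2_eq_square)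
  have expand: "(x - y) \<bullet> Mop (x - y) = x \<bullet> Mop x - 2 * (Mop y \<bullet> x) + y \<bullet> Mop y" for x y
  proof -
    have "(x - y) \<bullet> Mop (x - y) = x \<bullet> Mop x - x \<bullet> Mop y - y \<bullet> Mop x + y \<bullet> Mop y"
      by (simp add: Mdiff inner_diff_left inner_diff_right)
    also have "y \<bullet> Mop x = x \<bullet> Mop y" by (rule Msym)
    finally show ?thesis by (simp add: inner_commute)
  qed
  have Mq: "Mop (q b1 - q b2) = 0" if "b1 \<in> B0" "b2 \<in> B0" for b1 b2
  proof -
    have "\<And>x. x \<in> p ` A0 \<Longrightarrow> (-2 *\<^sub>R Mop (q b1 - q b2)) \<bullet> x + (q b1 \<bullet> Mop (q b1) - q b2 \<bullet> Mop (q b2)) = 0"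
    proof -
      fix x assume "x \<in> p ` A0"
      then obtain a where a: "a \<in> A0" "x = p a" by blast
      have z1: "(x - q b1) \<bullet> Mop (x - q b1) = 0" using isoAB[OF a(1) that(1)] a(2) Mquad by simp
      have z2: "(x - q b2) \<bullet> Mop (x - q b2) = 0" using isoAB[OF a(1) that(2)] a(2) Mquad by simp
      from z1 z2 show "(-2 *\<^sub>R Mop (q b1 - q b2)) \<bullet> x + (q b1 \<bullet> Mop (q b1) - q b2 \<bullet> Mop (q b2)) = 0"
        unfolding expand by (simp add: Mdiff inner_diff_left algebra_simps)
    qed
    from hat_spanD[OF spanA this] show ?thesis by simp
  qed
  have M0: "Mop u = 0" for u
  proof -
    obtain b0 where b0: "b0 \<in> B0" using hat_span_ne[OF spanB] by blast
    have "\<And>x. x \<in> q ` B0 \<Longrightarrow> Mop u \<bullet> x + (- (Mop u \<bullet> q b0)) = 0"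
    proof -
      fix x assume "x \<in> q ` B0"
      then obtain b where b: "b \<in> B0" "x = q b" by blast
      have "u \<bullet> Mop (q b - q b0) = 0" using Mq[OF b(1) b0] by simp
      then have "(q b - q b0) \<bullet> Mop u = 0" using Msym by metis
      then have "Mop u \<bullet> (q b - q b0) = 0" by (simp add: inner_commute)
      then show "Mop u \<bullet> x + (- (Mop u \<bullet> q b0)) = 0" using b(2) by (simp add: inner_diff_right)
    qed
    from hat_spanD[OF spanB this] show ?thesis by simp
  qed
  have iso: "(\<Sum>k<D. (l k \<bullet> v)^2) = v \<bullet> v" for v using Mquad[of v] M0[of v] by simp
  have Pall: "P i k = Tk k \<bullet> hat (p i)" if "i < n" "k < D" for i k
  proof -
    define z where "z k = P i k - Tk k \<bullet> hat (p i)" for k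
    define W where "W = (\<Sum>k<D. z k *\<^sub>R l k)"
    have Wv: "W \<bullet> v = (\<Sum>k<D. z k * (l k \<bullet> v))" for v by (simp add: W_def inner_sum_left)
    have "\<And>x. x \<in> q ` B0 \<Longrightarrow> (-2 *\<^sub>R W) \<bullet> x + ((\<Sum>k<D. (z k)^2) + 2 * (W \<bullet> p i)) = 0"
    proof -
      fix x assume "x \<in> q ` B0"
      then obtain b where b: "b \<in> B0" "x = q b" by blast
      have bm: "b < m" using b(1) B0_sub subJ by auto
      have "sqdistD D (P i) (Q b) = (\<Sum>k<D. (l k \<bullet> (p i - q b))^2)"
        using bars'[OF that(1) bm] iso dist_sq_inner by metis
      moreover have "sqdistD D (P i) (Q b) = (\<Sum>k<D. (z k + l k \<bullet> (p i - q b))^2)"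
        unfolding sqdistD_def using b(1) by (intro sum.cong refl) (simp add: QB z_def Tdiff[symmetric])
      ultimately have "(\<Sum>k<D. (z k + l k \<bullet> (p i - q b))^2) = (\<Sum>k<D. (l k \<bullet> (p i - q b))^2)" by simp
      then have "(\<Sum>k<D. (z k)^2) + 2 * (\<Sum>k<D. z k * (l k \<bullet> (p i - q b))) = 0"
        by (simp add: power2_sum sum.distrib sum_distrib_left mult_ac)
      then show "(-2 *\<^sub>R W) \<bullet> x + ((\<Sum>k<D. (z k)^2) + 2 * (W \<bullet> p i)) = 0"
        unfolding Wv[symmetric] using b(2) by (simp add: inner_diff_right algebra_simps)
    qed
    from hat_spanD[OF spanB this] have h: "-2 *\<^sub>R W = 0" "(\<Sum>k<D. (z k)^2) + 2 * (W \<bullet> p i) = 0" by auto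
    from h(1) have "W = 0" by simp
    with h(2) have "(\<Sum>k<D. (z k)^2) = 0" by simp
    then have "\<forall>k<D. z k = 0" by (simp add: sum_nonneg_eq_0_iff)
    then show ?thesis using that(2) by (simp add: z_def)
  qed
  have Qall: "Q j k = Tk k \<bullet> hat (q j)" if "j < m" "k < D" for j k
  proof -
    define z where "z k = Q j k - Tk k \<bullet> hat (q j)" for k
    define W where "W = (\<Sum>k<D. z k *\<^sub>R l k)"
    have Wv: "W \<bullet> v = (\<Sum>k<D. z k * (l k \<bullet> v))" for v by (simp add: W_def inner_sum_left)
    have "\<And>x. x \<in> p ` A0 \<Longrightarrow> (-2 *\<^sub>R W) \<bullet> x + ((\<Sum>k<D. (z k)^2) + 2 * (W \<bullet> q j)) = 0"
    proof -
      fix x assume "x \<in> p ` A0"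
      then obtain a where a: "a \<in> A0" "x = p a" by blast
      have an: "a < n" using a(1) A0_sub subI by auto
      have "sqdistD D (P a) (Q j) = (\<Sum>k<D. (l k \<bullet> (p a - q j))^2)"
        using bars'[OF an that(1)] iso dist_sq_inner by metis
      moreover have "sqdistD D (P a) (Q j) = (\<Sum>k<D. (l k \<bullet> (p a - q j) - z k)^2)"
        unfolding sqdistD_def using a(1) by (intro sum.cong refl) (simp add: PA z_def Tdiff[symmetric])
      ultimately have "(\<Sum>k<D. (l k \<bullet> (p a - q j) - z k)^2) = (\<Sum>k<D. (l k \<bullet> (p a - q j))^2)" by simp
      then have "(\<Sum>k<D. (z k)^2) - 2 * (\<Sum>k<D. z k * (l k \<bullet> (p a - q j))) = 0"
        by (simp add: power2_diff sum.distrib sum_subtractf sum_distrib_left mult_ac)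
      then show "(-2 *\<^sub>R W) \<bullet> x + ((\<Sum>k<D. (z k)^2) + 2 * (W \<bullet> q j)) = 0"
        unfolding Wv[symmetric] using a(2) by (simp add: inner_diff_right algebra_simps)
    qed
    from hat_spanD[OF spanA this] have h: "-2 *\<^sub>R W = 0" "(\<Sum>k<D. (z k)^2) + 2 * (W \<bullet> q j) = 0" by auto
    from h(1) have "W = 0" by simp
    with h(2) have "(\<Sum>k<D. (z k)^2) = 0" by simp
    then have "\<forall>k<D. z k = 0" by (simp add: sum_nonneg_eq_0_iff)
    then show ?thesis using that(2) by (simp add: z_def)
  qed
  have PP: "sqdistD D (P i) (P i') = (dist (p i) (p i'))^2" if "i < n" "i' < n" for i i'
  proof -
    have "sqdistD D (P i) (P i') = (\<Sum>k<D. (l k \<bullet> (p i - p i'))^2)"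
      unfolding sqdistD_def using that by (intro sum.cong refl) (simp add: Pall Tdiff)
    then show ?thesis by (simp add: iso dist_sq_inner)
  qed
  have QQ: "sqdistD D (Q j) (Q j') = (dist (q j) (q j'))^2" if "j < m" "j' < m" for j j'
  proof -
    have "sqdistD D (Q j) (Q j') = (\<Sum>k<D. (l k \<bullet> (q j - q j'))^2)"
      unfolding sqdistD_def using that by (intro sum.cong refl) (simp add: Qall Tdiff)
    then show ?thesis by (simp add: iso dist_sq_inner)
  qed
  show ?thesis using PP QQ by blast
qed

end


theorem mainTheorem5:
  fixes n m :: nat and p q :: "nat \<Rightarrow> real^'d" and I J :: "nat set"
  assumes "I \<subseteq> {..<n}" and "J \<subseteq> {..<m}"
    and "general_position (Inl ` I \<union> Inr ` J) (\<lambda>k. case k of Inl i \<Rightarrow> p i | Inr j \<Rightarrow> q j)"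
    and "\<not> strictly_separated_by_quadric (p ` I) (q ` J)"
  shows "bip_universally_rigid n m p q \<and>
         affine hull (p ` {..<n}) = UNIV \<and> affine hull (q ` {..<m}) = UNIV"
proof -
  define x where "x = (\<lambda>k. case k of Inl i \<Rightarrow> p i | Inr j \<Rightarrow> q j)"
  have finI: "finite I" using assms(1) finite_subset by blast
  have finJ: "finite J" using assms(2) finite_subset by blast
  have inj: "inj_on x (Inl ` I \<union> Inr ` J)"
  proof (rule inj_onI)
    fix k1 k2 assume k: "k1 \<in> Inl ` I \<union> Inr ` J" "k2 \<in> Inl ` I \<union> Inr ` J" "x k1 = x k2"
    show "k1 = k2"
    proof (rule ccontr)
      assume ne: "k1 \<noteq> k2"
      have "0 < CARD('d)" by simp
      then have "card {k1, k2} \<le> CARD('d) + 1" "2 \<le> card {k1, k2}" using ne by auto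
      moreover have gp: "\<forall>T\<subseteq>Inl ` I \<union> Inr ` J. 2 \<le> card T \<and> card T \<le> CARD('d) + 1 \<longrightarrow>
        inj_on x T \<and> aff_dim (x ` T) = int (card T) - 1"
        using assms(3) unfolding general_position_def x_def .
      moreover have "{k1, k2} \<subseteq> Inl ` I \<union> Inr ` J" using k(1,2) by simp
      ultimately have "inj_on x {k1, k2}" by (meson order.refl)
      then show False using ne k(3) by (simp add: inj_on_def)
    qed
  qed
  have ex: "\<exists>la mu. (\<forall>a\<in>I. 0 \<le> la a) \<and> (\<forall>b\<in>J. 0 \<le> mu b) \<and> sum la I + sum mu J = 1 \<and>
     (\<forall>M. (\<Sum>a\<in>I. la a * (hat (p a) \<bullet> (M *v hat (p a)))) = (\<Sum>b\<in>J. mu b * (hat (q b) \<bullet> (M *v hat (q b)))))"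
    by (rule gordan[OF finI finJ inj[unfolded x_def] assms(4)])
  then obtain la mu where lm: "\<forall>a\<in>I. 0 \<le> la a" "\<forall>b\<in>J. 0 \<le> mu b" "sum la I + sum mu J = 1"
    "\<forall>M. (\<Sum>a\<in>I. la a * (hat (p a) \<bullet> (M *v hat (p a)))) = (\<Sum>b\<in>J. mu b * (hat (q b) \<bullet> (M *v hat (q b))))"
    by (elim exE conjE) (intro that)
  have MI: "(\<Sum>a\<in>I. la a * ((th \<bullet> hat (p a)) * (et \<bullet> hat (p a))))
               = (\<Sum>b\<in>J. mu b * ((th \<bullet> hat (q b)) * (et \<bullet> hat (q b))))" for th et
    using lm(4)[rule_format, of "\<chi> i j. th$i * et$j"] by (simp add: quad_bilin)
  interpret frm p q I J la mu
  proof
    show "finite I" "finite J" by (fact finI, fact finJ)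
    show "\<And>a. a \<in> I \<Longrightarrow> 0 \<le> la a" using lm(1) by blast
    show "\<And>b. b \<in> J \<Longrightarrow> 0 \<le> mu b" using lm(2) by blast
    show "sum la I + sum mu J = 1" by (fact lm(3))
    show "\<And>th et. (\<Sum>a\<in>I. la a * ((th \<bullet> hat (p a)) * (et \<bullet> hat (p a))))
               = (\<Sum>b\<in>J. mu b * ((th \<bullet> hat (q b)) * (et \<bullet> hat (q b))))" by (rule MI)
    show "general_position (Inl ` I \<union> Inr ` J) (\<lambda>k. case k of Inl i \<Rightarrow> p i | Inr j \<Rightarrow> q j)" by (fact assms(3))
  qed
  have R: "bip_universally_rigid n m p q"
    unfolding bip_universally_rigid_def
  proof (intro allI impI)
    fix D P Q assume bars: "\<forall>i<n. \<forall>j<m. sqdistD D (P i) (Q j) = (dist (p i) (q j))^2"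
    show "(\<forall>i<n. \<forall>i'<n. sqdistD D (P i) (P i') = (dist (p i) (p i'))^2) \<and>
        (\<forall>j<m. \<forall>j'<m. sqdistD D (Q j) (Q j') = (dist (q j) (q j'))^2) \<and>
        (\<forall>i<n. \<forall>j<m. sqdistD D (P i) (Q j) = (dist (p i) (q j))^2)"
      using rigid[OF assms(1,2) bars] bars by (intro conjI) (erule conjE, assumption)+
  qed
  have "affine hull (p ` A0) \<subseteq> affine hull (p ` {..<n})"
    using A0_sub assms(1) by (intro hull_mono image_mono) auto
  then have HA: "affine hull (p ` {..<n}) = UNIV" using hat_span_hull[OF spanA] by auto
  have "affine hull (q ` B0) \<subseteq> affine hull (q ` {..<m})"
    using B0_sub assms(2) by (intro hull_mono image_mono) auto
  then have HB: "affine hull (q ` {..<m}) = UNIV" using hat_span_hull[OF spanB] by auto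
  show ?thesis using R HA HB by blast
qed


end
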